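(* Let $r:V\times V\to\{0,1\}$. If an undirected edge set (multigraph) $H$ on $V$ covers $f_r$, i.e., $d_H(X)\ge f_r(X)$ for all $X\subseteq V$, then $H$ has an orientation $D$ such that $D$ contains a directed $uv$-path for every $(u,v)$ with $r(u,v)=1$.
   Context: For $X\subseteq V$ let $\bar X=V\setminus X$, and $d_H(X)$ the number of edges of $H$ with one endpoint in $X$ and the other in $\bar X$. The set function $f_r$ is defined by $f_r(\emptyset)=f_r(V)=0$ and, for $\emptyset\ne X\subsetneq V$, $f_r(X)=\max\{r(u,v):u\in X,v\in\bar X\}+\max\{r(v,u):u\in X,v\in\bar X\}$. *)

theory Defs
  imports Main
begin

text \<open>A multigraph H on V is a list of edges (pairs of vertices of V); the order
  of the two endpoints of an undirected edge is irrelevant. Parallel edges are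
  repeated list entries.\<close>

definition cut_deg :: "'a set \<Rightarrow> ('a \<times> 'a) list \<Rightarrow> 'a set \<Rightarrow> nat" where
  "cut_deg V H X = length (filter (\<lambda>(a, b). (a \<in> X \<and> b \<in> V - X) \<or> (b \<in> X \<and> a \<in> V - X)) H)"

definition f_r :: "'a set \<Rightarrow> ('a \<Rightarrow> 'a \<Rightarrow> nat) \<Rightarrow> 'a set \<Rightarrow> nat" where
  "f_r V r X = (if X = {} \<or> X = V then 0
     else Max {r u v | u v. u \<in> X \<and> v \<in> V - X} + Max {r v u | u v. u \<in> X \<and> v \<in> V - X})"

definition is_orientation :: "('a \<times> 'a) list \<Rightarrow> ('a \<times> 'a) list \<Rightarrow> bool" where
  "is_orientation H D = list_all2 (\<lambda>e d. d = e \<or> d = prod.swap e) H D"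

definition has_dipath :: "('a \<times> 'a) list \<Rightarrow> 'a \<Rightarrow> 'a \<Rightarrow> bool" where
  "has_dipath D u v = ((u, v) \<in> (set D)\<^sup>*)"

end

theory Submission imports Defs begin

definition outd :: "'a set \<Rightarrow> ('a \<Rightarrow> 'a \<Rightarrow> nat) \<Rightarrow> 'a set \<Rightarrow> bool" where
  "outd V r X = (\<exists>u\<in>X. \<exists>v\<in>V-X. r u v = 1)"

definition ind :: "'a set \<Rightarrow> ('a \<Rightarrow> 'a \<Rightarrow> nat) \<Rightarrow> 'a set \<Rightarrow> bool" where
  "ind V r X = (\<exists>u\<in>X. \<exists>v\<in>V-X. r v u = 1)"

lemma Max01:
  assumes "finite S" "S \<noteq> {}" "S \<subseteq> {0,1::nat}"
  shows "Max S = (if 1 \<in> S then 1 else 0)"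
proof (cases "1 \<in> S")
  case True
  then have "Max S \<ge> 1" using assms Max_ge by blast
  moreover have "Max S \<in> S" using assms Max_in by blast
  then have "Max S \<in> {0,1}" using assms(3) by blast
  ultimately show ?thesis using True by auto
next
  case False
  then have "S = {0}" using assms by auto
  then show ?thesis using False by simp
qed

lemma f_r_eq:
  assumes fin: "finite V" and r01: "\<forall>u\<in>V. \<forall>v\<in>V. r u v \<in> {0, 1}" and XV: "X \<subseteq> V"
  shows "f_r V r X = (if outd V r X then 1 else 0) + (if ind V r X then 1 else 0)"
proof (cases "X = {} \<or> X = V")
  case True
  then show ?thesis by (auto simp: f_r_def outd_def ind_def)
next
  case False
  have e1: "{r u v | u v. u \<in> X \<and> v \<in> V - X} = (\<lambda>(u,v). r u v) ` (X \<times> (V - X))" by auto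
  have e2: "{r v u | u v. u \<in> X \<and> v \<in> V - X} = (\<lambda>(u,v). r v u) ` (X \<times> (V - X))" by auto
  have ne: "X \<times> (V - X) \<noteq> {}" using False XV by auto
  have fi: "finite (X \<times> (V - X))" using fin XV by (meson finite_Diff finite_SigmaI finite_subset)
  have s1: "(\<lambda>(u,v). r u v) ` (X \<times> (V - X)) \<subseteq> {0,1}" using r01 XV by fastforce
  have s2: "(\<lambda>(u,v). r v u) ` (X \<times> (V - X)) \<subseteq> {0,1}" using r01 XV by fastforce
  have m1: "Max ((\<lambda>(u,v). r u v) ` (X \<times> (V - X))) = (if outd V r X then 1 else 0)"
    using Max01[OF finite_imageI[OF fi] _ s1] ne unfolding outd_def by force
  have m2: "Max ((\<lambda>(u,v). r v u) ` (X \<times> (V - X))) = (if ind V r X then 1 else 0)"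
    using Max01[OF finite_imageI[OF fi] _ s2] ne unfolding ind_def by force
  show ?thesis unfolding f_r_def e1 e2 m1 m2 using False by simp
qed

definition cr :: "'a set \<Rightarrow> 'a set \<Rightarrow> 'a \<times> 'a \<Rightarrow> bool" where
  "cr V X = (\<lambda>(a, b). (a \<in> X \<and> b \<in> V - X) \<or> (b \<in> X \<and> a \<in> V - X))"

lemma cd_def2: "cut_deg V H X = length (filter (cr V X) H)"
  by (simp add: cut_deg_def cr_def)

lemma cd_append: "cut_deg V (xs @ ys) X = cut_deg V xs X + cut_deg V ys X"
  by (simp add: cd_def2)

lemma cd_cons: "cut_deg V (e # G) X = (if cr V X e then 1 else 0) + cut_deg V G X"
  by (simp add: cd_def2)

lemma cr_swap: "cr V X (prod.swap e) = cr V X e"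
  by (cases e) (auto simp: cr_def)

lemma cd_cong: "\<forall>e\<in>set H. cr V X e = cr V' X' e \<Longrightarrow> cut_deg V H X = cut_deg V' H X'"
  unfolding cd_def2 by (metis filter_cong)

lemma cd_split: "\<forall>e\<in>set G. (cr V X e \<longleftrightarrow> cr V X1 e \<or> cr V X2 e) \<and> \<not>(cr V X1 e \<and> cr V X2 e) \<Longrightarrow>
   cut_deg V G X = cut_deg V G X1 + cut_deg V G X2"
  unfolding cd_def2 by (induction G) auto

lemma cd_map: "cut_deg V (map g H) X = length (filter (cr V X \<circ> g) H)"
  by (simp add: cd_def2)

lemma cd_zero: "\<forall>e\<in>set H. \<not> cr V X e \<Longrightarrow> cut_deg V H X = 0"
  unfolding cd_def2 by simp

definition cond :: "'a set \<Rightarrow> ('a \<Rightarrow> 'a \<Rightarrow> nat) \<Rightarrow> ('a \<times> 'a) list \<Rightarrow> bool" where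
  "cond V r H = (\<forall>X. X \<subseteq> V \<longrightarrow> f_r V r X \<le> cut_deg V H X)"

definition r01 :: "'a set \<Rightarrow> ('a \<Rightarrow> 'a \<Rightarrow> nat) \<Rightarrow> bool" where
  "r01 V r = (\<forall>u\<in>V. \<forall>v\<in>V. r u v \<in> {0, 1})"

lemma cond_alt:
  assumes "finite V" "r01 V r"
  shows "cond V r H = (\<forall>X. X \<subseteq> V \<longrightarrow>
      (if outd V r X then 1 else 0) + (if ind V r X then 1 else 0) \<le> cut_deg V H X)"
  using f_r_eq[of V r] assms unfolding cond_def r01_def by auto

definition rb :: "'a set \<Rightarrow> ('a \<Rightarrow> 'a \<Rightarrow> nat) \<Rightarrow> 'a set \<Rightarrow> 'a \<Rightarrow> 'a \<Rightarrow> 'a \<Rightarrow> 'a \<Rightarrow> nat" where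
  "rb V r A x y u v = (if ((u \<in> A \<longleftrightarrow> v \<in> A) \<and> r u v = 1) \<or> (u \<in> A \<and> v = x \<and> (\<exists>w\<in>V-A. r u w = 1))
      \<or> (u = y \<and> v \<in> V - A \<and> (\<exists>w\<in>A. r w v = 1)) then 1 else 0)"

lemma rb_one: "rb V r A x y u v = 1 \<longleftrightarrow> (((u \<in> A \<longleftrightarrow> v \<in> A) \<and> r u v = 1) \<or> (u \<in> A \<and> v = x \<and> (\<exists>w\<in>V-A. r u w = 1))
      \<or> (u = y \<and> v \<in> V - A \<and> (\<exists>w\<in>A. r w v = 1)))"
  unfolding rb_def by simp

lemma rb_side: "rb V r A x y u v = 1 \<Longrightarrow> x \<in> A \<Longrightarrow> y \<notin> A \<Longrightarrow> (u \<in> A \<longleftrightarrow> v \<in> A)"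
  unfolding rb_one by blast

lemma ifsum: "(po \<Longrightarrow> o1 \<or> o2) \<Longrightarrow> (pi \<Longrightarrow> i1 \<or> i2) \<Longrightarrow>
  (if po then 1 else 0) + (if pi then 1 else 0) \<le>
  ((if o1 then 1 else 0) + (if i1 then 1 else 0)) + ((if o2 then 1 else 0) + (if i2 then 1 else (0::nat)))"
  by auto

lemma ifle: "(po \<Longrightarrow> qo) \<Longrightarrow> (pi \<Longrightarrow> qi) \<Longrightarrow>
  (if po then 1 else 0) + (if pi then 1 else 0) \<le> (if qo then 1 else 0) + (if qi then 1 else (0::nat))"
  by auto

lemma bridge_cond:
  assumes fin: "finite V" and r01: "r01 V r" and edG: "\<forall>(p,q)\<in>set G. p \<in> V \<and> q \<in> V"
    and AV: "A \<subseteq> V" and xA: "x \<in> A" and yV: "y \<in> V" "y \<notin> A"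
    and sep: "\<forall>(p,q)\<in>set G. (p \<in> A \<longleftrightarrow> q \<in> A)"
    and nob: "\<not>(\<exists>u\<in>V-A. \<exists>v\<in>A. r u v = 1)"
    and c: "cond V r ((x,y) # G)"
  shows "cond V (rb V r A x y) G"
proof -
  let ?r = "rb V r A x y"
  have r01': "r01 V ?r" by (simp add: r01_def rb_def)
  have c': "\<And>Z. Z \<subseteq> V \<Longrightarrow> (if outd V r Z then 1 else 0) + (if ind V r Z then 1 else 0) \<le> cut_deg V ((x,y) # G) Z"
    using c cond_alt[OF fin r01] by blast
  have K1: "(if outd V ?r Y then 1 else 0) + (if ind V ?r Y then 1 else 0) \<le> cut_deg V G Y"
    if YA: "Y \<subseteq> A" for Y
  proof -
    define Z where "Z = (if x \<in> Y then Y \<union> (V - A) else Y)"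
    have ZV: "Z \<subseteq> V" using YA AV by (auto simp: Z_def)
    have cz: "cut_deg V ((x,y) # G) Z = cut_deg V G Y"
    proof -
      have "\<not> cr V Z (x,y)" using xA yV YA by (auto simp: Z_def cr_def)
      moreover have "cut_deg V G Z = cut_deg V G Y"
        apply (rule cd_cong)
        using edG sep YA unfolding cr_def Z_def by auto
      ultimately show ?thesis by (simp add: cd_cons)
    qed
    have o: "outd V ?r Y \<Longrightarrow> outd V r Z"
      using YA AV xA yV unfolding outd_def rb_one Z_def by auto
    have i: "ind V ?r Y \<Longrightarrow> ind V r Z"
      using YA AV xA yV unfolding ind_def rb_one Z_def by auto
    show ?thesis using le_trans[OF ifle[OF o i] c'[OF ZV]] cz by simp
  qed
  have K2: "(if outd V ?r Y then 1 else 0) + (if ind V ?r Y then 1 else 0) \<le> cut_deg V G Y"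
    if YA: "Y \<subseteq> V - A" for Y
  proof -
    define Z where "Z = (if y \<in> Y then Y \<union> A else Y)"
    have ZV: "Z \<subseteq> V" using YA AV by (auto simp: Z_def)
    have cz: "cut_deg V ((x,y) # G) Z = cut_deg V G Y"
    proof -
      have "\<not> cr V Z (x,y)" using xA yV YA by (auto simp: Z_def cr_def)
      moreover have "cut_deg V G Z = cut_deg V G Y"
        apply (rule cd_cong)
        using edG sep YA unfolding cr_def Z_def by auto
      ultimately show ?thesis by (simp add: cd_cons)
    qed
    have o: "outd V ?r Y \<Longrightarrow> outd V r Z"
      using YA AV xA yV nob unfolding outd_def rb_one Z_def by auto
    have i: "ind V ?r Y \<Longrightarrow> ind V r Z"
      using YA AV xA yV nob unfolding ind_def rb_one Z_def by auto
    show ?thesis using le_trans[OF ifle[OF o i] c'[OF ZV]] cz by simp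
  qed
  show ?thesis
    unfolding cond_alt[OF fin r01']
  proof (intro allI impI)
    fix Y assume YV: "Y \<subseteq> V"
    have k4: "cut_deg V G Y = cut_deg V G (Y \<inter> A) + cut_deg V G (Y - A)"
      apply (rule cd_split)
      using edG sep unfolding cr_def by auto
    have o: "outd V ?r Y \<Longrightarrow> outd V ?r (Y \<inter> A) \<or> outd V ?r (Y - A)"
    proof -
      assume "outd V ?r Y"
      then obtain u v where uv: "u \<in> Y" "v \<in> V - Y" "?r u v = 1" unfolding outd_def by blast
      have "u \<in> A \<longleftrightarrow> v \<in> A" using rb_side[OF uv(3) xA yV(2)] .
      then show ?thesis using uv unfolding outd_def by (cases "u \<in> A") blast+
    qed
    have i: "ind V ?r Y \<Longrightarrow> ind V ?r (Y \<inter> A) \<or> ind V ?r (Y - A)"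
    proof -
      assume "ind V ?r Y"
      then obtain u v where uv: "u \<in> Y" "v \<in> V - Y" "?r v u = 1" unfolding ind_def by blast
      have "v \<in> A \<longleftrightarrow> u \<in> A" using rb_side[OF uv(3) xA yV(2)] .
      then show ?thesis using uv unfolding ind_def by (cases "u \<in> A") blast+
    qed
    show "(if outd V ?r Y then 1 else 0) + (if ind V ?r Y then 1 else 0) \<le> cut_deg V G Y"
    proof -
      have s1: "Y \<inter> A \<subseteq> A" and s2: "Y - A \<subseteq> V - A" using YV by auto
      show ?thesis unfolding k4
        by (rule le_trans[OF ifsum[OF o i] add_mono[OF K1[OF s1] K2[OF s2]]])
    qed
  qed
qed

lemma bridge_paths:
  assumes xA: "x \<in> A" and yA: "y \<notin> A" "y \<in> V" and AV: "A \<subseteq> V"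
    and nob: "\<not>(\<exists>u\<in>V-A. \<exists>v\<in>A. r u v = 1)"
    and xy: "(x,y) \<in> R" and sub: "R' \<subseteq> R"
    and p: "\<forall>u\<in>V. \<forall>v\<in>V. rb V r A x y u v = 1 \<longrightarrow> (u,v) \<in> R'\<^sup>*"
  shows "\<forall>u\<in>V. \<forall>v\<in>V. r u v = 1 \<longrightarrow> (u,v) \<in> R\<^sup>*"
proof (intro ballI impI)
  fix u v assume uV: "u \<in> V" and vV: "v \<in> V" and r: "r u v = 1"
  have mono: "R'\<^sup>* \<subseteq> R\<^sup>*" using sub by (rule rtrancl_mono)
  show "(u,v) \<in> R\<^sup>*"
  proof (cases "u \<in> A \<longleftrightarrow> v \<in> A")
    case True
    then have "rb V r A x y u v = 1" using r unfolding rb_one by blast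
    then show ?thesis using p uV vV mono by blast
  next
    case False
    then have uA: "u \<in> A" and vA: "v \<notin> A" using nob uV vV r by auto
    have "rb V r A x y u x = 1" using uA xA vV vA r unfolding rb_one by blast
    then have 1: "(u,x) \<in> R\<^sup>*" using p uV xA AV mono by blast
    have "rb V r A x y y v = 1" using uA yA vV vA r unfolding rb_one by blast
    then have 2: "(y,v) \<in> R\<^sup>*" using p vV yA mono by blast
    show ?thesis using 1 2 xy by (meson rtrancl.rtrancl_into_rtrancl rtrancl_trans)
  qed
qed

lemma cd_move: "e = (x,y) \<or> e = (y,x) \<Longrightarrow> cut_deg V (H1 @ e # H2) X = cut_deg V ((x,y) # (H1 @ H2)) X"
  using cr_swap[of V X "(x,y)"] by (auto simp: cd_append cd_cons)

definition IHP where
  "IHP V G = (\<forall>r'. r01 V r' \<longrightarrow> cond V r' G \<longrightarrow>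
      (\<exists>D'. is_orientation G D' \<and> (\<forall>u\<in>V. \<forall>v\<in>V. r' u v = 1 \<longrightarrow> (u,v) \<in> (set D')\<^sup>*)))"

lemma orient_step:
  assumes fin: "finite V" and r01: "r01 V r" and edG: "\<forall>(p,q)\<in>set (H1 @ H2). p \<in> V \<and> q \<in> V"
    and AV: "A \<subseteq> V" and xA: "x \<in> A" and yV: "y \<in> V" "y \<notin> A"
    and sep: "\<forall>(p,q)\<in>set (H1 @ H2). (p \<in> A \<longleftrightarrow> q \<in> A)"
    and nob: "\<not>(\<exists>u\<in>V-A. \<exists>v\<in>A. r u v = 1)"
    and e: "e = (x,y) \<or> e = (y,x)"
    and c: "cond V r (H1 @ e # H2)"
    and IH: "IHP V (H1 @ H2)"
  shows "\<exists>D. is_orientation (H1 @ e # H2) D \<and> (\<forall>u\<in>V. \<forall>v\<in>V. r u v = 1 \<longrightarrow> (u,v) \<in> (set D)\<^sup>*)"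
proof -
  have c2: "cond V r ((x,y) # (H1 @ H2))" using c cd_move[OF e] unfolding cond_def by simp
  have cb: "cond V (rb V r A x y) (H1 @ H2)"
    by (rule bridge_cond[OF fin r01 edG AV xA yV sep nob c2])
  have r01b: "r01 V (rb V r A x y)" by (simp add: r01_def rb_def)
  obtain D' where D': "is_orientation (H1 @ H2) D'"
    and p: "\<forall>u\<in>V. \<forall>v\<in>V. rb V r A x y u v = 1 \<longrightarrow> (u,v) \<in> (set D')\<^sup>*"
    using IH r01b cb unfolding IHP_def by blast
  obtain us vs where D'eq: "D' = us @ vs" and l1: "list_all2 (\<lambda>e d. d = e \<or> d = prod.swap e) H1 us"
    and l2: "list_all2 (\<lambda>e d. d = e \<or> d = prod.swap e) H2 vs"
    using D' unfolding is_orientation_def by (auto simp: list_all2_append1)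
  define D where "D = us @ (x,y) # vs"
  have o: "is_orientation (H1 @ e # H2) D"
    unfolding is_orientation_def D_def using l1 l2 e
    by (auto intro!: list_all2_appendI)
  have "\<forall>u\<in>V. \<forall>v\<in>V. r u v = 1 \<longrightarrow> (u,v) \<in> (set D)\<^sup>*"
    by (rule bridge_paths[OF xA yV(2) yV(1) AV nob _ _ p]) (auto simp: D_def D'eq)
  then show ?thesis using o by blast
qed

lemma bridge_case:
  assumes fin: "finite V" and r01: "r01 V r" and edH: "\<forall>(p,q)\<in>set (H1 @ (a,b) # H2). p \<in> V \<and> q \<in> V"
    and c: "cond V r (H1 @ (a,b) # H2)"
    and nobr: "(a,b) \<notin> {(p,q). (p,q) \<in> set (H1 @ H2) \<or> (q,p) \<in> set (H1 @ H2)}\<^sup>*"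
    and IH: "IHP V (H1 @ H2)"
  shows "\<exists>D. is_orientation (H1 @ (a,b) # H2) D \<and> (\<forall>u\<in>V. \<forall>v\<in>V. r u v = 1 \<longrightarrow> (u,v) \<in> (set D)\<^sup>*)"
proof -
  define E where "E = {(p,q). (p,q) \<in> set (H1 @ H2) \<or> (q,p) \<in> set (H1 @ H2)}"
  define A where "A = {v \<in> V. (a,v) \<in> E\<^sup>*}"
  have edG: "\<forall>(p,q)\<in>set (H1 @ H2). p \<in> V \<and> q \<in> V" using edH by auto
  have aV: "a \<in> V" and bV: "b \<in> V" using edH by auto
  have AV: "A \<subseteq> V" by (auto simp: A_def)
  have aA: "a \<in> A" using aV by (simp add: A_def)
  have bA: "b \<notin> A" using nobr unfolding A_def E_def by blast
  have sep: "\<forall>(p,q)\<in>set (H1 @ H2). (p \<in> A \<longleftrightarrow> q \<in> A)"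
  proof (intro ballI, clarify)
    fix p q assume pq: "(p,q) \<in> set (H1 @ H2)"
    then have e1: "(p,q) \<in> E" and e2: "(q,p) \<in> E" by (auto simp: E_def)
    have pV: "p \<in> V" and qV: "q \<in> V" using pq edG by auto
    show "(p \<in> A) = (q \<in> A)"
    proof
      assume "p \<in> A"
      then have "(a,p) \<in> E\<^sup>*" by (simp add: A_def)
      then have "(a,q) \<in> E\<^sup>*" using e1 by (rule rtrancl_into_rtrancl)
      then show "q \<in> A" using qV by (simp add: A_def)
    next
      assume "q \<in> A"
      then have "(a,q) \<in> E\<^sup>*" by (simp add: A_def)
      then have "(a,p) \<in> E\<^sup>*" using e2 by (rule rtrancl_into_rtrancl)
      then show "p \<in> A" using pV by (simp add: A_def)
    qed
  qed
  have cA: "cut_deg V ((a,b) # (H1 @ H2)) A = 1"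
  proof -
    have "cut_deg V (H1 @ H2) A = 0"
      by (rule cd_zero) (use sep edG in \<open>auto simp: cr_def\<close>)
    moreover have "cr V A (a,b)" using aA bA bV by (simp add: cr_def)
    ultimately show ?thesis by (simp add: cd_cons)
  qed
  have c2: "cond V r ((a,b) # (H1 @ H2))" using c cd_move[of "(a,b)" a b] unfolding cond_def by simp
  have "(if outd V r A then 1 else 0) + (if ind V r A then 1 else 0) \<le> cut_deg V ((a,b) # (H1 @ H2)) A"
    using c2[unfolded cond_alt[OF fin r01], rule_format, OF AV] .
  then have nboth: "\<not> (outd V r A \<and> ind V r A)" using cA by (simp split: if_splits)
  show ?thesis
  proof (cases "\<exists>u\<in>V-A. \<exists>v\<in>A. r u v = 1")
    case False
    show ?thesis
      by (rule orient_step[OF fin r01 edG AV aA bV bA sep False _ c IH]) simp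
  next
    case True
    then have "ind V r A" unfolding ind_def by blast
    then have no: "\<not> outd V r A" using nboth by blast
    have AV': "V - A \<subseteq> V" by auto
    have bA': "b \<in> V - A" using bV bA by auto
    have aA': "a \<in> V" "a \<notin> V - A" using aV aA by auto
    have sep': "\<forall>(p,q)\<in>set (H1 @ H2). (p \<in> V - A \<longleftrightarrow> q \<in> V - A)" using sep edG by auto
    have nob': "\<not>(\<exists>u\<in>V-(V-A). \<exists>v\<in>V-A. r u v = 1)" proof -
      have "V - (V - A) = A" using AV by blast
      then show ?thesis using no unfolding outd_def by simp
    qed
    show ?thesis
      by (rule orient_step[OF fin r01 edG AV' bA' aA' sep' nob' _ c IH]) simp
  qed
qed

lemma idx_in:
  assumes "z \<in> set (H1 @ H2)"
  shows "\<exists>j<length (H1 @ e # H2). j \<noteq> length H1 \<and> (H1 @ e # H2) ! j = z"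
proof (cases "z \<in> set H1")
  case True
  then obtain j where "j < length H1" "H1 ! j = z" by (auto simp: in_set_conv_nth)
  then show ?thesis by (intro exI[of _ j]) (auto simp: nth_append)
next
  case False
  then have "z \<in> set H2" using assms by auto
  then obtain j where "j < length H2" "H2 ! j = z" by (auto simp: in_set_conv_nth)
  then show ?thesis by (intro exI[of _ "length H1 + Suc j"]) (auto simp: nth_append)
qed

lemma nl_le: "\<forall>x\<in>set xs. P (g x) \<longrightarrow> P x \<Longrightarrow> length (filter P (map g xs)) \<le> length (filter P xs)"
  by (induction xs) auto

lemma nl_less: "\<forall>x\<in>set xs. P (g x) \<longrightarrow> P x \<Longrightarrow> y \<in> set xs \<Longrightarrow> P y \<Longrightarrow> \<not> P (g y) \<Longrightarrow>
   length (filter P (map g xs)) < length (filter P xs)"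
proof (induction xs)
  case Nil then show ?case by simp
next
  case (Cons x xs)
  show ?case
  proof (cases "y = x")
    case True
    then show ?thesis using Cons.prems nl_le[of xs P g] by (auto simp: le_imp_less_Suc)
  next
    case False
    then have "length (filter P (map g xs)) < length (filter P xs)" using Cons by auto
    moreover have "P (g x) \<longrightarrow> P x" using Cons.prems by auto
    ultimately show ?thesis by auto
  qed
qed

lemma path_rtrancl:
  assumes "\<forall>i<m. (f i, f (Suc i)) \<in> R" "i \<le> j" "j \<le> m"
  shows "(f i, f j) \<in> R\<^sup>*"
  using assms(2,3)
proof (induction j)
  case 0 then show ?case by simp
next
  case (Suc j)
  show ?case
  proof (cases "i = Suc j")
    case True then show ?thesis by simp
  next
    case False
    then have "(f i, f j) \<in> R\<^sup>*" using Suc by auto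
    moreover have "(f j, f (Suc j)) \<in> R" using assms(1) Suc.prems by auto
    ultimately show ?thesis by (rule rtrancl_into_rtrancl)
  qed
qed

lemma lift:
  assumes arcs: "\<forall>x y. (x,y) \<in> R2 \<longrightarrow> (\<exists>p q. (p,q) \<in> R \<and> \<phi> p = x \<and> \<phi> q = y)"
    and sc: "\<forall>p q. \<phi> p = \<phi> q \<longrightarrow> (p,q) \<in> R\<^sup>*"
    and xy: "(x,y) \<in> R2\<^sup>*"
  shows "\<forall>u. \<phi> u = x \<longrightarrow> (\<exists>v. \<phi> v = y \<and> (u,v) \<in> R\<^sup>*)"
  using xy
proof (induction rule: rtrancl_induct)
  case base then show ?case by blast
next
  case (step y z)
  show ?case
  proof (intro allI impI)
    fix u assume "\<phi> u = x"
    then obtain v where v: "\<phi> v = y" "(u,v) \<in> R\<^sup>*" using step.IH by blast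
    obtain p q where pq: "(p,q) \<in> R" "\<phi> p = y" "\<phi> q = z" using arcs step.hyps(2) by blast
    have "(v,p) \<in> R\<^sup>*" using sc v pq by auto
    then have "(u,q) \<in> R\<^sup>*" using v(2) pq(1) by (meson rtrancl.rtrancl_into_rtrancl rtrancl_trans)
    then show "\<exists>v. \<phi> v = z \<and> (u,v) \<in> R\<^sup>*" using pq by blast
  qed
qed

lemma min_path:
  assumes ab: "(a,b) \<in> E\<^sup>*" and ne: "a \<noteq> b"
  shows "\<exists>m f. 0 < m \<and> f 0 = a \<and> f m = b \<and> (\<forall>i<m. (f i, f (Suc i)) \<in> E)
     \<and> (\<forall>i\<le>m. \<forall>j\<le>m. f i = f j \<longrightarrow> i = j)"
proof -
  obtain n where "(a,b) \<in> E ^^ n" using ab rtrancl_power by blast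
  define m where "m = (LEAST n. (a,b) \<in> E ^^ n)"
  have m: "(a,b) \<in> E ^^ m" unfolding m_def by (rule LeastI) fact
  have mmin: "\<And>k. k < m \<Longrightarrow> (a,b) \<notin> E ^^ k" unfolding m_def by (rule not_less_Least)
  obtain f where f: "f 0 = a" "f m = b" "\<forall>i<m. (f i, f (Suc i)) \<in> E"
    using m relpow_fun_conv by metis
  have m0: "0 < m" using m ne by (cases m) auto
  have inj: "i = j" if ij: "i < j" "j \<le> m" "f i = f j" for i j
  proof (rule ccontr)
    define d where "d = j - i"
    define g where "g t = (if t \<le> i then f t else f (t + d))" for t
    have d0: "0 < d" using ij by (simp add: d_def)
    have "g 0 = a" using f by (simp add: g_def)
    moreover have "g (m - d) = b"
    proof (cases "m - d \<le> i")
      case True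
      then have "j = m" using ij by (simp add: d_def)
      then have "m - d = i" using ij by (simp add: d_def)
      then show ?thesis using ij f \<open>j = m\<close> by (simp add: g_def)
    next
      case False
      then show ?thesis using f ij by (simp add: g_def d_def)
    qed
    moreover have "\<forall>t<m - d. (g t, g (Suc t)) \<in> E"
    proof (intro allI impI)
      fix t assume t: "t < m - d"
      show "(g t, g (Suc t)) \<in> E"
      proof (cases "Suc t \<le> i")
        case True
        then show ?thesis using f(3) ij by (simp add: g_def)
      next
        case False
        show ?thesis
        proof (cases "t = i")
          case True
          then have "g t = f j" "g (Suc t) = f (Suc j)" using ij by (auto simp: g_def d_def)
          moreover have "j < m" using t True ij by (simp add: d_def)
          ultimately show ?thesis using f(3) by simp
        next
          case False
          then have "g t = f (t + d)" "g (Suc t) = f (Suc (t + d))" using \<open>\<not> Suc t \<le> i\<close> by (auto simp: g_def)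
          moreover have "t + d < m" using t by simp
          ultimately show ?thesis using f(3) by simp
        qed
      qed
    qed
    ultimately have "(a,b) \<in> E ^^ (m - d)" using relpow_fun_conv by metis
    moreover have "m - d < m" using d0 m0 by simp
    ultimately show False using mmin by blast
  qed
  have "\<forall>i\<le>m. \<forall>j\<le>m. f i = f j \<longrightarrow> i = j"
    by (metis inj linorder_neqE_nat)
  then show ?thesis using f m0 by blast
qed

definition nlc :: "('a \<times> 'a) list \<Rightarrow> nat" where
  "nlc H = length (filter (\<lambda>(a,b). a \<noteq> b) H)"

definition goal :: "'a set \<Rightarrow> ('a \<Rightarrow> 'a \<Rightarrow> nat) \<Rightarrow> ('a \<times> 'a) list \<Rightarrow> bool" where
  "goal V r H = (\<exists>D. is_orientation H D \<and> (\<forall>u\<in>V. \<forall>v\<in>V. r u v = 1 \<longrightarrow> (u,v) \<in> (set D)\<^sup>*))"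

lemma cycle_case:
  fixes H :: "('a \<times> 'a) list"
  assumes fin: "finite V" and r01: "r01 V r" and edH: "\<forall>(p,q)\<in>set H. p \<in> V \<and> q \<in> V"
    and c: "cond V r H" and Heq: "H = H1 @ (a,b) # H2" and ne: "a \<noteq> b"
    and conn: "(a,b) \<in> {(p,q). (p,q) \<in> set (H1 @ H2) \<or> (q,p) \<in> set (H1 @ H2)}\<^sup>*"
    and IH: "\<And>V' r' (H' :: ('a \<times> 'a) list). nlc H' < nlc H \<Longrightarrow> finite V' \<Longrightarrow> r01 V' r' \<Longrightarrow>
       \<forall>(p,q)\<in>set H'. p \<in> V' \<and> q \<in> V' \<Longrightarrow> cond V' r' H' \<Longrightarrow> goal V' r' H'"
  shows "goal V r H"
proof -
  define E where "E = {(p,q). (p,q) \<in> set (H1 @ H2) \<or> (q,p) \<in> set (H1 @ H2)}"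
  define k where "k = length H1"
  have Hk: "H ! k = (a,b)" "k < length H" by (auto simp: Heq k_def nth_append)
  obtain m f where m0: "0 < m" and f0: "f 0 = a" and fm: "f m = b"
    and fE: "\<forall>i<m. (f i, f (Suc i)) \<in> E" and finj: "\<forall>i\<le>m. \<forall>j\<le>m. f i = f j \<longrightarrow> i = j"
    using min_path[OF conn[folded E_def] ne] by blast
  have jex: "\<forall>i\<in>{..<m}. \<exists>j. j < length H \<and> j \<noteq> k \<and> (H ! j = (f i, f (Suc i)) \<or> H ! j = (f (Suc i), f i))"
  proof
    fix i assume "i \<in> {..<m}"
    then have "(f i, f (Suc i)) \<in> E" using fE by auto
    then have "(f i, f (Suc i)) \<in> set (H1 @ H2) \<or> (f (Suc i), f i) \<in> set (H1 @ H2)" by (simp add: E_def)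
    then show "\<exists>j. j < length H \<and> j \<noteq> k \<and> (H ! j = (f i, f (Suc i)) \<or> H ! j = (f (Suc i), f i))"
      using idx_in[of _ H1 H2 "(a,b)"] unfolding Heq k_def by blast
  qed
  obtain jj where jj: "\<forall>i\<in>{..<m}. jj i < length H \<and> jj i \<noteq> k \<and>
      (H ! jj i = (f i, f (Suc i)) \<or> H ! jj i = (f (Suc i), f i))"
    using bchoice[OF jex] by blast
  have jinj: "inj_on jj {..<m}"
  proof (rule inj_onI)
    fix i i' assume i: "i \<in> {..<m}" and i': "i' \<in> {..<m}" and eq: "jj i = jj i'"
    have "(f i = f i' \<and> f (Suc i) = f (Suc i')) \<or> (f i = f (Suc i') \<and> f (Suc i) = f i')"
      using jj i i' eq by (metis prod.inject)
    then show "i = i'"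
    proof
      assume "f i = f i' \<and> f (Suc i) = f (Suc i')"
      then show ?thesis using finj i i' by auto
    next
      assume h: "f i = f (Suc i') \<and> f (Suc i) = f i'"
      then have "i = Suc i'" "Suc i = i'" using finj i i' by auto
      then show ?thesis by simp
    qed
  qed
  define S where "S = f ` {0..m}"
  define \<phi> where "\<phi> p = (if p \<in> S then a else p)" for p
  have aS: "a \<in> S" using f0 by (force simp: S_def)
  have bS: "b \<in> S" using fm by (force simp: S_def)
  have fS: "\<And>i. i \<le> m \<Longrightarrow> f i \<in> S" by (auto simp: S_def)
  have \<phi>a: "\<phi> a = a" "\<phi> b = a" using aS bS by (auto simp: \<phi>_def)
  define V2 where "V2 = \<phi> ` V"
  define Hc where "Hc = map (map_prod \<phi> \<phi>) H"
  define rc where "rc x y = (if \<exists>u\<in>V. \<exists>v\<in>V. \<phi> u = x \<and> \<phi> v = y \<and> r u v = 1 then 1 else (0::nat))" for x y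
  have nl: "nlc Hc < nlc H"
    unfolding nlc_def Hc_def
    by (rule nl_less[where y="(a,b)"]) (auto simp: Heq ne \<phi>a)
  have rc1: "\<exists>u\<in>V. \<exists>v\<in>V. \<phi> u = x \<and> \<phi> v = y \<and> r u v = 1" if "rc x y = 1" for x y
    using that unfolding rc_def by (metis zero_neq_one)
  have finV2: "finite V2" using fin by (simp add: V2_def)
  have r01c: "r01 V2 rc" by (simp add: r01_def rc_def)
  have edc: "\<forall>(p,q)\<in>set Hc. p \<in> V2 \<and> q \<in> V2" using edH by (auto simp: Hc_def V2_def)
  have cc: "cond V2 rc Hc"
    unfolding cond_alt[OF finV2 r01c]
  proof (intro allI impI)
    fix X assume XV: "X \<subseteq> V2"
    define Y where "Y = {v \<in> V. \<phi> v \<in> X}"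
    have YV: "Y \<subseteq> V" by (auto simp: Y_def)
    have cut: "cut_deg V2 Hc X = cut_deg V H Y"
    proof -
      have "filter (cr V2 X \<circ> map_prod \<phi> \<phi>) H = filter (cr V Y) H"
      proof (rule filter_cong[OF refl])
        fix e assume "e \<in> set H"
        then obtain p q where e: "e = (p,q)" "p \<in> V" "q \<in> V" using edH by (cases e) auto
        show "(cr V2 X \<circ> map_prod \<phi> \<phi>) e = cr V Y e"
          using e by (auto simp: cr_def V2_def Y_def)
      qed
      then show ?thesis unfolding cd_def2 Hc_def by simp
    qed
    have o: "outd V2 rc X \<Longrightarrow> outd V r Y"
    proof -
      assume "outd V2 rc X"
      then obtain x y where xy: "x \<in> X" "y \<in> V2 - X" "rc x y = 1" unfolding outd_def by blast
      then obtain u v where uv: "u \<in> V" "v \<in> V" "\<phi> u = x" "\<phi> v = y" "r u v = 1"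
        using rc1 by blast
      then show "outd V r Y" using xy unfolding outd_def Y_def by blast
    qed
    have i: "ind V2 rc X \<Longrightarrow> ind V r Y"
    proof -
      assume "ind V2 rc X"
      then obtain x y where xy: "x \<in> X" "y \<in> V2 - X" "rc y x = 1" unfolding ind_def by blast
      then obtain u v where uv: "u \<in> V" "v \<in> V" "\<phi> u = y" "\<phi> v = x" "r u v = 1"
        using rc1 by blast
      then show "ind V r Y" using xy unfolding ind_def Y_def by blast
    qed
    have "(if outd V r Y then 1 else 0) + (if ind V r Y then 1 else 0) \<le> cut_deg V H Y"
      using c[unfolded cond_alt[OF fin r01], rule_format, OF YV] .
    then show "(if outd V2 rc X then 1 else 0) + (if ind V2 rc X then 1 else 0) \<le> cut_deg V2 Hc X"
      using le_trans[OF ifle[OF o i]] cut by simp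
  qed
  obtain Dc where Dc: "is_orientation Hc Dc" and Dcp: "\<forall>u\<in>V2. \<forall>v\<in>V2. rc u v = 1 \<longrightarrow> (u,v) \<in> (set Dc)\<^sup>*"
    using IH[OF nl finV2 r01c edc cc] unfolding goal_def by blast
  have Dcl: "length Dc = length H"
    using Dc unfolding is_orientation_def Hc_def by (simp add: list_all2_conv_all_nth)
  have Dcn: "\<And>i. i < length H \<Longrightarrow> Dc ! i = map_prod \<phi> \<phi> (H ! i) \<or> Dc ! i = prod.swap (map_prod \<phi> \<phi> (H ! i))"
    using Dc unfolding is_orientation_def Hc_def by (simp add: list_all2_conv_all_nth)
  define iv where "iv = inv_into {..<m} jj"
  have ivj: "\<And>t. t < m \<Longrightarrow> iv (jj t) = t" using jinj by (simp add: iv_def inv_into_f_f)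
  define dd where "dd i = (if i = k then (b,a) else if i \<in> jj ` {..<m} then (f (iv i), f (Suc (iv i)))
     else if Dc ! i = map_prod \<phi> \<phi> (H ! i) then H ! i else prod.swap (H ! i))" for i
  define D where "D = map dd [0..<length H]"
  have Dn: "\<And>i. i < length H \<Longrightarrow> D ! i = dd i" by (simp add: D_def)
  have lD: "length D = length H" by (simp add: D_def)
  have ddj: "\<And>t. t < m \<Longrightarrow> dd (jj t) = (f t, f (Suc t))"
    using jj ivj by (auto simp: dd_def)
  have ori: "is_orientation H D"
    unfolding is_orientation_def list_all2_conv_all_nth
  proof (intro conjI allI impI)
    show "length H = length D" using lD by simp
  next
    fix i assume i: "i < length H"
    show "D ! i = H ! i \<or> D ! i = prod.swap (H ! i)"
    proof (cases "i = k")
      case True then show ?thesis using Hk i Dn by (simp add: dd_def)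
    next
      case False
      show ?thesis
      proof (cases "i \<in> jj ` {..<m}")
        case True
        then obtain t where t: "t < m" "i = jj t" by auto
        have h: "H ! i = (f t, f (Suc t)) \<or> H ! i = (f (Suc t), f t)" using jj t by auto
        then show ?thesis using Dn[OF i] ddj[OF t(1)] t by auto
      next
        case nj: False
        then show ?thesis using False Dn[OF i] by (simp add: dd_def)
      qed
    qed
  qed
  have img: "map_prod \<phi> \<phi> (dd i) = Dc ! i" if i: "i < length H" for i
  proof (cases "i = k")
    case True
    then show ?thesis using Dcn[OF i] Hk \<phi>a by (auto simp: dd_def)
  next
    case False
    show ?thesis
    proof (cases "i \<in> jj ` {..<m}")
      case True
      then obtain t where t: "t < m" "i = jj t" by auto
      have ft: "\<phi> (f t) = a" "\<phi> (f (Suc t)) = a" using fS t(1) by (auto simp: \<phi>_def)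
      have "H ! i = (f t, f (Suc t)) \<or> H ! i = (f (Suc t), f t)" using jj t by auto
      then have "Dc ! i = (a,a)" using Dcn[OF i] ft by auto
      then show ?thesis using ddj[OF t(1)] t ft by simp
    next
      case nj: False
      show ?thesis
      proof (cases "Dc ! i = map_prod \<phi> \<phi> (H ! i)")
        case True then show ?thesis using False nj by (simp add: dd_def)
      next
        case F2: False
        then have "Dc ! i = prod.swap (map_prod \<phi> \<phi> (H ! i))" using Dcn[OF i] by blast
        then show ?thesis using False nj F2 by (cases "H ! i") (simp add: dd_def)
      qed
    qed
  qed
  have arcs: "\<forall>x y. (x,y) \<in> set Dc \<longrightarrow> (\<exists>p q. (p,q) \<in> set D \<and> \<phi> p = x \<and> \<phi> q = y)"
  proof (intro allI impI)
    fix x y assume "(x,y) \<in> set Dc"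
    then obtain i where i: "i < length H" "Dc ! i = (x,y)" using Dcl by (auto simp: in_set_conv_nth)
    have "dd i \<in> set D" using i(1) Dn lD by (metis nth_mem)
    moreover have "map_prod \<phi> \<phi> (dd i) = (x,y)" using img[OF i(1)] i(2) by simp
    moreover obtain p q where "dd i = (p,q)" by (cases "dd i")
    ultimately show "\<exists>p q. (p,q) \<in> set D \<and> \<phi> p = x \<and> \<phi> q = y" by auto
  qed
  have cyc: "\<forall>t<m. (f t, f (Suc t)) \<in> set D"
  proof (intro allI impI)
    fix t assume t: "t < m"
    have "jj t < length H" using jj t by auto
    then show "(f t, f (Suc t)) \<in> set D" using Dn ddj[OF t] lD by (metis nth_mem)
  qed
  have ba: "(b,a) \<in> set D" using Dn[OF Hk(2)] Hk lD by (metis dd_def nth_mem)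
  have scS: "(f i, f j) \<in> (set D)\<^sup>*" if "i \<le> m" "j \<le> m" for i j
  proof -
    have "(f i, f m) \<in> (set D)\<^sup>*" using path_rtrancl[OF cyc] that by simp
    moreover have "(f 0, f j) \<in> (set D)\<^sup>*" using path_rtrancl[OF cyc] that by simp
    ultimately show ?thesis using ba f0 fm by (meson rtrancl.rtrancl_into_rtrancl rtrancl_trans)
  qed
  have sc: "\<forall>p q. \<phi> p = \<phi> q \<longrightarrow> (p,q) \<in> (set D)\<^sup>*"
  proof (intro allI impI)
    fix p q assume pq: "\<phi> p = \<phi> q"
    show "(p,q) \<in> (set D)\<^sup>*"
    proof (cases "p \<in> S")
      case True
      then have "q \<in> S" using pq aS by (auto simp: \<phi>_def split: if_splits)
      then show ?thesis using True scS by (auto simp: S_def)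
    next
      case False
      then have "q \<notin> S" using pq aS by (auto simp: \<phi>_def split: if_splits)
      then show ?thesis using False pq by (simp add: \<phi>_def)
    qed
  qed
  show ?thesis
    unfolding goal_def
  proof (intro exI conjI ballI impI)
    show "is_orientation H D" by (rule ori)
  next
    fix u v assume uV: "u \<in> V" and vV: "v \<in> V" and r: "r u v = 1"
    have "rc (\<phi> u) (\<phi> v) = 1" using uV vV r by (auto simp: rc_def)
    then have "(\<phi> u, \<phi> v) \<in> (set Dc)\<^sup>*" using Dcp uV vV by (auto simp: V2_def)
    then obtain v' where v': "\<phi> v' = \<phi> v" "(u,v') \<in> (set D)\<^sup>*" using lift[OF arcs sc] by blast
    have "(v',v) \<in> (set D)\<^sup>*" using sc v'(1) by blast
    then show "(u,v) \<in> (set D)\<^sup>*" using v'(2) by (rule rtrancl_trans[rotated])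
  qed
qed


lemma base_case:
  assumes fin: "finite V" and r01: "r01 V r" and c: "cond V r H" and loops: "\<forall>(p,q)\<in>set H. p = q"
  shows "goal V r H"
  unfolding goal_def
proof (intro exI conjI ballI impI)
  show "is_orientation H H" unfolding is_orientation_def by (simp add: list_all2_refl)
next
  fix u v assume uV: "u \<in> V" and vV: "v \<in> V" and r: "r u v = 1"
  show "(u,v) \<in> (set H)\<^sup>*"
  proof (cases "u = v")
    case True then show ?thesis by simp
  next
    case False
    have o: "outd V r {u}" using False vV r unfolding outd_def by auto
    have "cut_deg V H {u} = 0" by (rule cd_zero) (use loops in \<open>auto simp: cr_def\<close>)
    moreover have "(if outd V r {u} then 1 else 0) + (if ind V r {u} then 1 else 0) \<le> cut_deg V H {u}"
      using c[unfolded cond_alt[OF fin r01], rule_format, of "{u}"] uV by simp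
    ultimately show ?thesis using o by simp
  qed
qed

lemma main:
  "nlc H = n \<Longrightarrow> finite V \<Longrightarrow> r01 V r \<Longrightarrow> \<forall>(p,q)\<in>set H. p \<in> V \<and> q \<in> V \<Longrightarrow> cond V r H \<Longrightarrow> goal V r H"
proof (induction n arbitrary: V r H rule: less_induct)
  case (less n V r H)
  show ?case
  proof (cases "\<exists>(p,q)\<in>set H. p \<noteq> q")
    case False
    then show ?thesis using base_case[OF less.prems(2,3,5)] by auto
  next
    case True
    then obtain a b where ab: "(a,b) \<in> set H" "a \<noteq> b" by auto
    then obtain H1 H2 where Heq: "H = H1 @ (a,b) # H2" by (meson split_list)
    have IH: "\<And>V' r' (H' :: ('a \<times> 'a) list). nlc H' < nlc H \<Longrightarrow> finite V' \<Longrightarrow> r01 V' r' \<Longrightarrow>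
       \<forall>(p,q)\<in>set H'. p \<in> V' \<and> q \<in> V' \<Longrightarrow> cond V' r' H' \<Longrightarrow> goal V' r' H'"
      using less.IH less.prems(1) by blast
    show ?thesis
    proof (cases "(a,b) \<in> {(p,q). (p,q) \<in> set (H1 @ H2) \<or> (q,p) \<in> set (H1 @ H2)}\<^sup>*")
      case True
      show ?thesis by (rule cycle_case[OF less.prems(2,3,4,5) Heq ab(2) True IH])
    next
      case False
      have nl: "nlc (H1 @ H2) < nlc H" using ab(2) by (simp add: Heq nlc_def)
      have edG: "\<forall>(p,q)\<in>set (H1 @ H2). p \<in> V \<and> q \<in> V" using less.prems(4) Heq by auto
      have "IHP V (H1 @ H2)"
        unfolding IHP_def using IH[OF nl less.prems(2) _ edG] unfolding goal_def by blast
      then show ?thesis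
        using bridge_case[OF less.prems(2,3) less.prems(4)[unfolded Heq] less.prems(5)[unfolded Heq] False]
        unfolding goal_def Heq by blast
    qed
  qed
qed

theorem lemma2:
  fixes V :: "'a set" and r :: "'a \<Rightarrow> 'a \<Rightarrow> nat" and H :: "('a \<times> 'a) list"
  assumes "finite V"
    and "\<forall>u\<in>V. \<forall>v\<in>V. r u v \<in> {0, 1}"
    and "\<forall>(a, b) \<in> set H. a \<in> V \<and> b \<in> V"
    and "\<forall>X. X \<subseteq> V \<longrightarrow> cut_deg V H X \<ge> f_r V r X"
  shows "\<exists>D. is_orientation H D \<and> (\<forall>u\<in>V. \<forall>v\<in>V. r u v = 1 \<longrightarrow> has_dipath D u v)"
proof -
  have "goal V r H"
    by (rule main[OF refl assms(1) _ assms(3)]) (use assms(2,4) in \<open>auto simp: r01_def cond_def\<close>)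
  then show ?thesis unfolding goal_def has_dipath_def by blast
qed

end
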